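(* For every $n\ge 0$, if $B_n$ is the Boolean lattice of subsets of an $n$-element set, then $\mathcal{J}(B_n,t)=(t+1)^n$.
   Context: $B_n$ is ranked by cardinality with $\hat 0=\emptyset$ and $\hat 1$ the whole set, $\mathrm{rk}(B_n)=n$. Let $\delta_3(x,y,z)=1$ if $x=y=z$ and $0$ otherwise, let $J$ be the unique integer-valued function on triples $x\le y\le z$ with $\sum_{x\le a\le y\le b\le z}J(a,y,b)=\delta_3(x,y,z)$ for all $x\le y\le z$, and $\mathcal{J}(\mathcal{P},t)=(-1)^{\mathrm{rk}(\mathcal{P})}\sum_{x\in\mathcal{P}}J(\hat 0,x,\hat 1)\,t^{\mathrm{rk}(\mathcal{P})-\mathrm{rk}(x)}$. *)

theory Defs
  imports "HOL-Computational_Algebra.Polynomial"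
begin

text \<open>J_fun P le is the unique integer-valued function on triples x \<le> y \<le> z of P with
  sum over x \<le> a \<le> y \<le> b \<le> z of J(a,y,b) equal to delta_3(x,y,z);
  it is normalised to 0 outside such triples so that it is unique as a HOL function.\<close>

definition J_fun :: "'a set \<Rightarrow> ('a \<Rightarrow> 'a \<Rightarrow> bool) \<Rightarrow> ('a \<Rightarrow> 'a \<Rightarrow> 'a \<Rightarrow> int)" where
  "J_fun P le = (THE J.
     (\<forall>x y z. \<not> (x \<in> P \<and> y \<in> P \<and> z \<in> P \<and> le x y \<and> le y z) \<longrightarrow> J x y z = 0) \<and>
     (\<forall>x\<in>P. \<forall>y\<in>P. \<forall>z\<in>P. le x y \<and> le y z \<longrightarrow>
        (\<Sum>(a, b) \<in> {(a, b). a \<in> P \<and> b \<in> P \<and> le x a \<and> le a y \<and> le y b \<and> le b z}. J a y b)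
        = (if x = y \<and> y = z then 1 else 0)))"

definition calJ :: "'a set \<Rightarrow> ('a \<Rightarrow> 'a \<Rightarrow> bool) \<Rightarrow> ('a \<Rightarrow> nat) \<Rightarrow> 'a \<Rightarrow> 'a \<Rightarrow> int poly" where
  "calJ P le rk zero one =
     (-1) ^ rk one * (\<Sum>x\<in>P. monom (J_fun P le zero x one) (rk one - rk x))"

definition boolean_lattice :: "nat \<Rightarrow> nat set set" where
  "boolean_lattice n = Pow {0..<n}"

end

theory Submission
  imports Defs
begin

definition J0 :: "nat \<Rightarrow> nat set \<Rightarrow> nat set \<Rightarrow> nat set \<Rightarrow> int" where
  "J0 n x y z = (if x \<in> Pow {0..<n} \<and> y \<in> Pow {0..<n} \<and> z \<in> Pow {0..<n} \<and> x \<subseteq> y \<and> y \<subseteq> z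
     then (-1) ^ (card x + card z) else 0)"

lemma alt_sum:
  assumes "finite y" "x \<subseteq> y"
  shows "(\<Sum>a | x \<subseteq> a \<and> a \<subseteq> y. (-1::int) ^ card a) = (if x = y then (-1) ^ card y else 0)"
proof (cases "x = y")
  case True
  then have "{a. x \<subseteq> a \<and> a \<subseteq> y} = {y}" by auto
  then show ?thesis using True by simp
next
  case False
  then have "x \<subset> y" using assms by auto
  have fin: "finite {a. x \<subseteq> a \<and> a \<subseteq> y}"
    by (rule finite_subset[of _ "Pow y"]) (use assms in auto)
  have "card {T. T \<subseteq> y \<and> x \<subseteq> T \<and> even(card T)} = card {T. T \<subseteq> y \<and> x \<subseteq> T \<and> odd(card T)}"
    using card_subsupersets_even_odd[OF assms(1) \<open>x \<subset> y\<close>] .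
  then have "(\<Sum>a \<in> {a. x \<subseteq> a \<and> a \<subseteq> y}. (-1::int) ^ card a) = 0"
    by (intro sum_alternating_cancels[OF fin]) (simp add: conj_commute conj_left_commute)
  then show ?thesis using False by simp
qed

lemma S_eq:
  fixes x y z :: "nat set"
  assumes "z \<subseteq> {0..<n}"
  shows "{(a, b). a \<in> Pow {0..<n} \<and> b \<in> Pow {0..<n} \<and> x \<subseteq> a \<and> a \<subseteq> y \<and> y \<subseteq> b \<and> b \<subseteq> z}
    = {a. x \<subseteq> a \<and> a \<subseteq> y} \<times> {b. y \<subseteq> b \<and> b \<subseteq> z}"
  using assms by blast

lemma J0_sum:
  fixes x y z :: "nat set"
  assumes "x \<in> Pow {0..<n}" "y \<in> Pow {0..<n}" "z \<in> Pow {0..<n}" "x \<subseteq> y" "y \<subseteq> z"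
  shows "(\<Sum>(a, b) \<in> {(a, b). a \<in> Pow {0..<n} \<and> b \<in> Pow {0..<n} \<and> x \<subseteq> a \<and> a \<subseteq> y \<and> y \<subseteq> b \<and> b \<subseteq> z}. J0 n a y b)
        = (if x = y \<and> y = z then 1 else 0)"
proof -
  have fy: "finite y" "finite z" using assms by (auto intro: finite_subset[OF _ finite_atLeastLessThan])
  have "(\<Sum>(a, b) \<in> {(a, b). a \<in> Pow {0..<n} \<and> b \<in> Pow {0..<n} \<and> x \<subseteq> a \<and> a \<subseteq> y \<and> y \<subseteq> b \<and> b \<subseteq> z}. J0 n a y b)
     = (\<Sum>(a, b) \<in> {a. x \<subseteq> a \<and> a \<subseteq> y} \<times> {b. y \<subseteq> b \<and> b \<subseteq> z}. (-1::int) ^ card a * (-1) ^ card b)"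
    unfolding S_eq[OF assms(3)[simplified]]
  proof (rule sum.cong[OF refl])
    fix p assume h: "p \<in> {a. x \<subseteq> a \<and> a \<subseteq> y} \<times> {b. y \<subseteq> b \<and> b \<subseteq> z}"
    obtain a b where p: "p = (a, b)" by fastforce
    have h: "x \<subseteq> a" "a \<subseteq> y" "y \<subseteq> b" "b \<subseteq> z" using h p by auto
    then have "a \<subseteq> {0..<n}" "b \<subseteq> {0..<n}" using assms by auto
    then show "(case p of (a, b) \<Rightarrow> J0 n a y b) = (case p of (a, b) \<Rightarrow> (-1::int) ^ card a * (-1) ^ card b)"
      using h assms p by (simp add: J0_def power_add)
  qed
  also have "\<dots> = (\<Sum>a | x \<subseteq> a \<and> a \<subseteq> y. (-1::int) ^ card a) * (\<Sum>b | y \<subseteq> b \<and> b \<subseteq> z. (-1::int) ^ card b)"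
    by (simp add: sum_product sum.cartesian_product)
  also have "\<dots> = (if x = y \<and> y = z then 1 else 0)"
    using alt_sum[OF fy(1) assms(4)] alt_sum[OF fy(2) assms(5)]
    by (auto simp flip: power_add)
  finally show ?thesis .
qed


lemma J_uniq:
  fixes J :: "nat set \<Rightarrow> nat set \<Rightarrow> nat set \<Rightarrow> int"
  assumes h0: "\<forall>x y z. \<not> (x \<in> Pow {0..<n} \<and> y \<in> Pow {0..<n} \<and> z \<in> Pow {0..<n} \<and> x \<subseteq> y \<and> y \<subseteq> z) \<longrightarrow> J x y z = 0"
    and h1: "\<forall>x\<in>Pow {0..<n}. \<forall>y\<in>Pow {0..<n}. \<forall>z\<in>Pow {0..<n}. x \<subseteq> y \<and> y \<subseteq> z \<longrightarrow>
        (\<Sum>(a, b) \<in> {(a, b). a \<in> Pow {0..<n} \<and> b \<in> Pow {0..<n} \<and> x \<subseteq> a \<and> a \<subseteq> y \<and> y \<subseteq> b \<and> b \<subseteq> z}. J a y b)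
        = (if x = y \<and> y = z then 1 else 0)"
  shows "J x y z = J0 n x y z"
proof (induction "card (z - x)" arbitrary: x z rule: less_induct)
  case less
  show ?case
  proof (cases "x \<in> Pow {0..<n} \<and> y \<in> Pow {0..<n} \<and> z \<in> Pow {0..<n} \<and> x \<subseteq> y \<and> y \<subseteq> z")
    case False
    then show ?thesis using h0 by (simp add: J0_def)
  next
    case True
    define S where "S = {(a, b). a \<in> Pow {0..<n} \<and> b \<in> Pow {0..<n} \<and> x \<subseteq> a \<and> a \<subseteq> y \<and> y \<subseteq> b \<and> b \<subseteq> z}"
    have fin: "finite S"
      by (rule finite_subset[of _ "Pow {0..<n} \<times> Pow {0..<n}"]) (auto simp: S_def)
    have mem: "(x, z) \<in> S" using True by (auto simp: S_def)
    have fz: "finite (z - x)" using True by (auto intro: finite_subset[OF _ finite_atLeastLessThan])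
    have rest: "(\<Sum>(a, b) \<in> S - {(x, z)}. J a y b) = (\<Sum>(a, b) \<in> S - {(x, z)}. J0 n a y b)"
    proof (rule sum.cong[OF refl])
      fix p assume hp: "p \<in> S - {(x, z)}"
      obtain a b where p: "p = (a, b)" by fastforce
      have hh: "x \<subseteq> a" "a \<subseteq> y" "y \<subseteq> b" "b \<subseteq> z" "(a, b) \<noteq> (x, z)" using hp p by (auto simp: S_def)
      have "b - a \<subset> z - x" using hh True by blast
      then have "card (b - a) < card (z - x)" using fz by (rule psubset_card_mono[rotated])
      then show "(case p of (a, b) \<Rightarrow> J a y b) = (case p of (a, b) \<Rightarrow> J0 n a y b)"
        using less.hyps p by simp
    qed
    have "(\<Sum>(a, b) \<in> S. J a y b) = (\<Sum>(a, b) \<in> S. J0 n a y b)"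
      using h1 J0_sum[of x n y z] True unfolding S_def by simp
    then have "J x y z + (\<Sum>(a, b) \<in> S - {(x, z)}. J a y b) = J0 n x y z + (\<Sum>(a, b) \<in> S - {(x, z)}. J0 n a y b)"
      using sum.remove[OF fin mem, of "\<lambda>(a, b). J a y b"] sum.remove[OF fin mem, of "\<lambda>(a, b). J0 n a y b"]
      by simp
    then show ?thesis using rest by simp
  qed
qed

lemma J_fun_eq: "J_fun (Pow {0..<n}) (\<subseteq>) = J0 n"
  unfolding J_fun_def
proof (rule the_equality)
  show "(\<forall>x y z. \<not> (x \<in> Pow {0..<n} \<and> y \<in> Pow {0..<n} \<and> z \<in> Pow {0..<n} \<and> x \<subseteq> y \<and> y \<subseteq> z) \<longrightarrow> J0 n x y z = 0) \<and>
     (\<forall>x\<in>Pow {0..<n}. \<forall>y\<in>Pow {0..<n}. \<forall>z\<in>Pow {0..<n}. x \<subseteq> y \<and> y \<subseteq> z \<longrightarrow>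
        (\<Sum>(a, b) \<in> {(a, b). a \<in> Pow {0..<n} \<and> b \<in> Pow {0..<n} \<and> x \<subseteq> a \<and> a \<subseteq> y \<and> y \<subseteq> b \<and> b \<subseteq> z}. J0 n a y b)
        = (if x = y \<and> y = z then 1 else 0))"
  proof (intro conjI allI impI ballI)
    fix x y z :: "nat set"
    assume "\<not> (x \<in> Pow {0..<n} \<and> y \<in> Pow {0..<n} \<and> z \<in> Pow {0..<n} \<and> x \<subseteq> y \<and> y \<subseteq> z)"
    then show "J0 n x y z = 0" unfolding J0_def by (rule if_not_P)
  next
    fix x y z :: "nat set"
    assume "x \<in> Pow {0..<n}" "y \<in> Pow {0..<n}" "z \<in> Pow {0..<n}" "x \<subseteq> y \<and> y \<subseteq> z"
    then show "(\<Sum>(a, b) \<in> {(a, b). a \<in> Pow {0..<n} \<and> b \<in> Pow {0..<n} \<and> x \<subseteq> a \<and> a \<subseteq> y \<and> y \<subseteq> b \<and> b \<subseteq> z}. J0 n a y b)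
        = (if x = y \<and> y = z then 1 else 0)" by (intro J0_sum) auto
  qed
next
  fix J :: "nat set \<Rightarrow> nat set \<Rightarrow> nat set \<Rightarrow> int" assume H: "(\<forall>x y z. \<not> (x \<in> Pow {0..<n} \<and> y \<in> Pow {0..<n} \<and> z \<in> Pow {0..<n} \<and> x \<subseteq> y \<and> y \<subseteq> z) \<longrightarrow> J x y z = 0) \<and>
     (\<forall>x\<in>Pow {0..<n}. \<forall>y\<in>Pow {0..<n}. \<forall>z\<in>Pow {0..<n}. x \<subseteq> y \<and> y \<subseteq> z \<longrightarrow>
        (\<Sum>(a, b) \<in> {(a, b). a \<in> Pow {0..<n} \<and> b \<in> Pow {0..<n} \<and> x \<subseteq> a \<and> a \<subseteq> y \<and> y \<subseteq> b \<and> b \<subseteq> z}. J a y b)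
        = (if x = y \<and> y = z then 1 else 0))"
  show "J = J0 n" by (intro ext J_uniq[OF conjunct1[OF H] conjunct2[OF H]])
qed

lemma pow_sum:
  assumes "finite A"
  shows "(\<Sum>x\<in>Pow A. ([:0, 1:] :: int poly) ^ card (A - x)) = [:1, 1:] ^ card A"
  using assms
proof (induction A rule: finite_induct)
  case empty
  then show ?case by simp
next
  case (insert a A)
  have inj: "inj_on (insert a) (Pow A)" using insert.hyps
    by (smt (verit, ccfv_SIG) PowD inj_on_def insert_ident subset_iff)
  have disj: "Pow A \<inter> insert a ` Pow A = {}" using insert.hyps by auto
  have c1: "x \<in> Pow A \<Longrightarrow> card (insert a A - x) = Suc (card (A - x))" for x
    using insert.hyps by (subst insert_Diff_if) (auto simp: card_insert_if)
  have c2: "x \<in> Pow A \<Longrightarrow> card (insert a A - insert a x) = card (A - x)" for x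
    using insert.hyps by (metis Diff_insert2 Diff_insert_absorb)
  have c3: "A - insert a x = A - x" for x
    using insert.hyps by auto
  have "(\<Sum>x\<in>Pow (insert a A). ([:0, 1:] :: int poly) ^ card (insert a A - x))
     = (\<Sum>x\<in>Pow A. ([:0, 1:] :: int poly) ^ card (insert a A - x)) + (\<Sum>x\<in>insert a ` Pow A. ([:0, 1:] :: int poly) ^ card (insert a A - x))"
    unfolding Pow_insert using insert.hyps disj by (intro sum.union_disjoint) auto
  also have "\<dots> = [:0, 1:] * (\<Sum>x\<in>Pow A. ([:0, 1:] :: int poly) ^ card (A - x)) + (\<Sum>x\<in>Pow A. ([:0, 1:] :: int poly) ^ card (A - x))"
    using insert.hyps by (simp add: sum.reindex[OF inj] c1 c3 sum_distrib_left)
  also have "\<dots> = [:1, 1:] ^ card (insert a A)"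
    using insert by (simp add: algebra_simps)
  finally show ?case .
qed

theorem proposition6p7:
  fixes n :: nat
  shows "calJ (boolean_lattice n) (\<subseteq>) card {} {0..<n} = [:1, 1:] ^ n"
proof -
  have "calJ (boolean_lattice n) (\<subseteq>) card {} {0..<n}
      = (\<Sum>x\<in>Pow {0..<n}. (-1) ^ n * monom ((-1) ^ n) (n - card x))"
    unfolding calJ_def boolean_lattice_def J_fun_eq
    by (simp add: sum_distrib_left J0_def)
  also have "\<dots> = (\<Sum>x\<in>Pow {0..<n}. [:0, 1:] ^ card ({0..<n} - x))"
  proof (rule sum.cong[OF refl])
    fix x assume "x \<in> Pow {0..<n}"
    then have "card ({0..<n} - x) = n - card x"
      by (simp add: card_Diff_subset finite_subset)
    moreover have "(-1) ^ n * monom ((-1::int) ^ n) k = [:0, 1:] ^ k" for k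
      by (cases "even n") (auto simp: monom_altdef minus_monom)
    ultimately show "(-1) ^ n * monom ((-1::int) ^ n) (n - card x) = [:0, 1:] ^ card ({0..<n} - x)"
      by simp
  qed
  also have "\<dots> = [:1, 1:] ^ n" using pow_sum[of "{0..<n}"] by simp
  finally show ?thesis .
qed

end
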